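(* Let $p,q>0$ with $p\neq 1$, $q\neq 1$ and $\frac{\ln p}{\ln q}$ irrational. Let $f$ be a locally integrable function on $\mathbb{R}\setminus\{0\}$ such that $\int_x^{px} f(t)\,dt$ and $\int_x^{qx} f(t)\,dt$ are constant (independent of $x\in\mathbb{R}\setminus\{0\}$). Then there is a constant $c$ such that $f(t)=\frac{c}{t}$ for almost every $t\in\mathbb{R}\setminus\{0\}$. *)

theory Defs
  imports "HOL-Analysis.Analysis"
begin

definition locally_integrable_punctured :: "(real \<Rightarrow> real) \<Rightarrow> bool" where
  "locally_integrable_punctured f \<longleftrightarrow>
     (\<forall>K. compact K \<and> 0 \<notin> K \<longrightarrow> set_integrable lborel K f)"

end

theory Submission
  imports Defs
begin

lemma ae_zero_Ioi:
  fixes g :: "real \<Rightarrow> real"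
  assumes int: "integrable lborel g" and z: "\<And>x. (LBINT t:{x<..}. g t) = 0"
  shows "AE t in lborel. g t = 0"
proof -
  have gm[measurable]: "g \<in> borel_measurable lborel" using int by auto
  have eq: "(\<integral>\<^sup>+t. ennreal (g t) * indicator {x<..} t \<partial>lborel) = (\<integral>\<^sup>+t. ennreal (- g t) * indicator {x<..} t \<partial>lborel)" for x
  proof -
    let ?h = "\<lambda>t. g t * indicator {x<..} t"
    have hi: "integrable lborel ?h" using int by (intro integrable_real_mult_indicator) auto
    have f1: "(\<integral>\<^sup>+t. ennreal (?h t) \<partial>lborel) \<noteq> \<infinity>" "(\<integral>\<^sup>+t. ennreal (- ?h t) \<partial>lborel) \<noteq> \<infinity>"
      using integrableD[OF hi] by auto
    have "integral\<^sup>L lborel ?h = 0" using z[of x] unfolding set_lebesgue_integral_def by (simp add: mult.commute)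
    then have "enn2real (\<integral>\<^sup>+t. ennreal (?h t) \<partial>lborel) = enn2real (\<integral>\<^sup>+t. ennreal (- ?h t) \<partial>lborel)"
      using real_lebesgue_integral_def[OF hi] by simp
    then have "ennreal (enn2real (\<integral>\<^sup>+t. ennreal (?h t) \<partial>lborel)) = ennreal (enn2real (\<integral>\<^sup>+t. ennreal (- ?h t) \<partial>lborel))"
      by simp
    then have "(\<integral>\<^sup>+t. ennreal (?h t) \<partial>lborel) = (\<integral>\<^sup>+t. ennreal (- ?h t) \<partial>lborel)"
      using f1 by (simp add: ennreal_enn2real_if)
    moreover have "\<And>t. ennreal (?h t) = ennreal (g t) * indicator {x<..} t"
      "\<And>t. ennreal (- ?h t) = ennreal (- g t) * indicator {x<..} t"
      by (auto split: split_indicator)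
    ultimately show ?thesis by simp
  qed
  have fin: "(\<integral>\<^sup>+t. ennreal (g t) * indicator {x<..} t \<partial>lborel) < \<infinity>" for x
  proof -
    have "(\<integral>\<^sup>+t. ennreal (g t) * indicator {x<..} t \<partial>lborel) \<le> (\<integral>\<^sup>+t. ennreal (g t) \<partial>lborel)"
      by (intro nn_integral_mono) (auto split: split_indicator)
    also have "\<dots> < \<infinity>" using integrableD(2)[OF int] by (simp add: less_top)
    finally show ?thesis .
  qed
  have "density lborel (\<lambda>t. ennreal (g t)) = density lborel (\<lambda>t. ennreal (- g t))"
  proof (rule measure_eqI_lessThan)
    fix x :: real
    show "emeasure (density lborel (\<lambda>t. ennreal (g t))) {x<..} < \<infinity>"
      using fin[of x] by (simp add: emeasure_density)
    show "emeasure (density lborel (\<lambda>t. ennreal (g t))) {x<..} = emeasure (density lborel (\<lambda>t. ennreal (- g t))) {x<..}"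
      using eq[of x] by (simp add: emeasure_density)
  qed simp_all
  then have "AE t in lborel. ennreal (g t) = ennreal (- g t)"
    by (intro sigma_finite_measure.density_unique[OF sigma_finite_lborel]) auto
  then show ?thesis
  proof eventually_elim
    case (elim t) then show ?case by (cases "g t \<ge> 0") (auto simp: ennreal_neg)
  qed
qed

lemma per_nat:
  fixes H :: "real \<Rightarrow> real"
  assumes "\<And>s. H (s + a) = H s + C"
  shows "H (s + real n * a) = H s + real n * C"
proof (induction n)
  case (Suc n)
  have "H (s + real (Suc n) * a) = H ((s + real n * a) + a)" by (simp add: algebra_simps)
  also have "\<dots> = H (s + real n * a) + C" by (rule assms)
  also have "\<dots> = H s + real (Suc n) * C" using Suc by (simp add: algebra_simps)
  finally show ?case .
qed simp

lemma per_int: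
  fixes H :: "real \<Rightarrow> real"
  assumes "\<And>s. H (s + a) = H s"
  shows "H (s + of_int k * a) = H s"
proof (cases "k \<ge> 0")
  case True
  then obtain n where "k = int n" by (metis nonneg_eq_int)
  then show ?thesis using per_nat[of H a 0 s n] assms by simp
next
  case False
  obtain n where k: "k = - int n" using False by (intro that[of "nat (-k)"]) simp
  have "H ((s - real n * a) + real n * a) = H (s - real n * a)"
    using per_nat[of H a 0 "s - real n * a" n] assms by simp
  then show ?thesis using k by simp
qed

lemma periodic_const:
  fixes H :: "real \<Rightarrow> real"
  assumes cont: "\<And>s. isCont H s" and ab: "a \<noteq> 0" "b \<noteq> 0" "a / b \<notin> \<rat>"
    and pa: "\<And>s. H (s + a) = H s" and pb: "\<And>s. H (s + b) = H s + C"
  shows "H s = H 0"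
proof -
  have "compact (H ` {-\<bar>a\<bar>..\<bar>a\<bar>})"
    by (intro compact_continuous_image continuous_at_imp_continuous_on) (auto simp: cont)
  then have "bounded (H ` {-\<bar>a\<bar>..\<bar>a\<bar>})" by (rule compact_imp_bounded)
  then obtain M where "\<forall>y\<in>H ` {-\<bar>a\<bar>..\<bar>a\<bar>}. norm y \<le> M" unfolding bounded_iff by blast
  then have M: "\<And>x. x \<in> {-\<bar>a\<bar>..\<bar>a\<bar>} \<Longrightarrow> \<bar>H x\<bar> \<le> M" by auto
  have bnd: "\<bar>H s\<bar> \<le> M" for s
  proof -
    have fr: "0 \<le> frac (s/a)" "frac (s/a) < 1" by (auto simp: frac_ge_0 frac_lt_1)
    have "\<bar>a * frac (s/a)\<bar> \<le> \<bar>a\<bar>" using fr by (simp add: abs_mult mult_left_le)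
    then have "a * frac (s/a) \<in> {-\<bar>a\<bar>..\<bar>a\<bar>}" by (simp add: abs_le_iff)
    then have hm: "\<bar>H (a * frac (s/a))\<bar> \<le> M" by (rule M)
    have "s = a * frac (s/a) + of_int \<lfloor>s/a\<rfloor> * a"
      using ab by (simp add: frac_def algebra_simps)
    then have "H s = H (a * frac (s/a) + of_int \<lfloor>s/a\<rfloor> * a)" by simp
    also have "\<dots> = H (a * frac (s/a))" by (rule per_int[of H a, OF pa])
    finally show ?thesis using hm by simp
  qed
  have C0: "C = 0"
  proof (rule ccontr)
    assume "C \<noteq> 0"
    obtain n :: nat where n: "2 * M / \<bar>C\<bar> < real n" using reals_Archimedean2 by blast
    have "2 * M < real n * \<bar>C\<bar>" using n \<open>C \<noteq> 0\<close> by (simp add: field_simps)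
    moreover have "H (0 + real n * b) = H 0 + real n * C" by (rule per_nat[of H b C, OF pb])
    moreover have "\<bar>H (0 + real n * b)\<bar> \<le> M" "\<bar>H 0\<bar> \<le> M" using bnd by auto
    ultimately show False by (simp add: abs_mult)
  qed
  have pb': "H (s + b) = H s" for s using pb C0 by simp
  show "H s = H 0"
  proof (rule ccontr)
    assume ne: "H s \<noteq> H 0"
    define e where "e = \<bar>H s - H 0\<bar>"
    have e: "e > 0" using ne by (simp add: e_def)
    obtain d where d: "d > 0" and dd: "\<And>t. dist t s < d \<Longrightarrow> dist (H t) (H s) < e"
      using cont[of s] e unfolding continuous_at_eps_delta by blast
    obtain h k where "k > 0" and hk: "\<bar>of_int k * (a/b) - of_int h - s/b\<bar> < d / \<bar>b\<bar>"
      using sequence_of_fractional_parts_is_dense[OF ab(3), where \<epsilon>="d / \<bar>b\<bar>" and \<alpha>="s/b"] d ab by (simp, blast)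
    have "\<bar>b\<bar> * \<bar>of_int k * (a/b) - of_int h - s/b\<bar> < d"
      using hk ab by (simp add: field_simps)
    also have "\<bar>b\<bar> * \<bar>of_int k * (a/b) - of_int h - s/b\<bar> = \<bar>of_int k * a - of_int h * b - s\<bar>"
    proof -
      have "b * (of_int k * (a/b) - of_int h - s/b) = of_int k * a - of_int h * b - s"
        using ab by (simp add: field_simps)
      then show ?thesis by (metis abs_mult)
    qed
    finally have "dist (of_int k * a - of_int h * b) s < d" by (simp add: dist_real_def)
    then have "dist (H (of_int k * a - of_int h * b)) (H s) < e" by (rule dd)
    moreover have "H (of_int k * a - of_int h * b) = H 0"
      using per_int[of H a, OF pa, of "0 + of_int (-h) * b" k] per_int[of H b, OF pb', of 0 "-h"]
      by (simp add: algebra_simps)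
    ultimately show False by (simp add: e_def dist_real_def abs_minus_commute)
  qed
qed

lemma LI_interval:
  fixes f :: "real \<Rightarrow> real"
  assumes LI: "\<And>u v. 0 < u \<Longrightarrow> u \<le> v \<Longrightarrow> set_integrable lborel {u..v} f"
    and "0 < u" "0 < v"
  shows "interval_lebesgue_integrable lborel (ereal u) (ereal v) f"
proof (cases "u \<le> v")
  case True
  then show ?thesis unfolding interval_lebesgue_integrable_def
    by simp (rule set_integrable_subset[OF LI[OF \<open>0<u\<close> True]], auto)
next
  case False
  then show ?thesis unfolding interval_lebesgue_integrable_def
    by simp (rule set_integrable_subset[OF LI[OF \<open>0<v\<close>, of u]], auto)
qed

lemma LI_sum:
  fixes f :: "real \<Rightarrow> real" and u v w :: real
  assumes LI: "\<And>u v. 0 < u \<Longrightarrow> u \<le> v \<Longrightarrow> set_integrable lborel {u..v} f"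
    and "0 < u" "0 < v" "0 < w"
  shows "(LBINT t=u..v. f t) + (LBINT t=v..w. f t) = (LBINT t=u..w. f t)"
proof -
  have "interval_lebesgue_integrable lborel (ereal (min u (min v w))) (ereal (max u (max v w))) f"
    by (rule LI_interval[OF LI]) (use assms in auto)
  moreover have "ereal (min u (min v w)) = min (ereal u) (min (ereal v) (ereal w))"
    "ereal (max u (max v w)) = max (ereal u) (max (ereal v) (ereal w))" by (auto simp: min_def max_def)
  ultimately show ?thesis by (intro interval_integral_sum) simp
qed

lemma LI_cont:
  fixes f :: "real \<Rightarrow> real" and x0 b0 :: real
  assumes LI: "\<And>u v. 0 < u \<Longrightarrow> u \<le> v \<Longrightarrow> set_integrable lborel {u..v} f"
    and x0: "0 < x0" and b0: "0 < b0"
  shows "isCont (\<lambda>x::real. LBINT t=b0..x. f t) x0"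
proof -
  define \<alpha> :: real where "\<alpha> = x0 / 2"
  define \<beta> :: real where "\<beta> = 2 * x0"
  have ab: "0 < \<alpha>" "\<alpha> < x0" "x0 < \<beta>" using x0 by (auto simp: \<alpha>_def \<beta>_def)
  have "f integrable_on {\<alpha>..\<beta>}" using set_borel_integral_eq_integral(1)[OF LI[of \<alpha> \<beta>]] ab by auto
  then have c: "continuous_on {\<alpha>..\<beta>} (\<lambda>x. integral {\<alpha>..x} f)" by (rule indefinite_integral_continuous_1)
  have eq: "(LBINT t=b0..x. f t) = (LBINT t=b0..\<alpha>. f t) + integral {\<alpha>..x} f" if "x \<in> {\<alpha>..\<beta>}" for x :: real
  proof -
    have "(LBINT t=b0..\<alpha>. f t) + (LBINT t=\<alpha>..x. f t) = (LBINT t=b0..x. f t)"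
      by (rule LI_sum[OF LI]) (use that ab b0 in auto)
    moreover have "(LBINT t=\<alpha>..x. f t) = integral {\<alpha>..x} f"
      by (rule interval_integral_eq_integral) (use that ab LI in auto)
    ultimately show ?thesis by simp
  qed
  have "continuous_on {\<alpha>..\<beta>} (\<lambda>x. (LBINT t=b0..\<alpha>. f t) + integral {\<alpha>..x} f)"
    by (intro continuous_on_add continuous_on_const c)
  then have "continuous_on {\<alpha>..\<beta>} (\<lambda>x::real. LBINT t=b0..x. f t)"
    by (rule continuous_on_eq) (rule eq[symmetric])
  then show ?thesis by (rule continuous_on_interior) (use ab in auto)
qed

lemma pos_half:
  fixes p q A B \<alpha> \<beta> :: real and f :: "real \<Rightarrow> real"
  assumes p: "p > 0" "p \<noteq> 1" and q: "q > 0" "q \<noteq> 1" and irr: "ln p / ln q \<notin> \<rat>"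
    and LI: "\<And>u v. 0 < u \<Longrightarrow> u \<le> v \<Longrightarrow> set_integrable lborel {u..v} f"
    and hA: "\<And>x::real. x > 0 \<Longrightarrow> (LBINT t=x..p*x. f t) = A"
    and hB: "\<And>x::real. x > 0 \<Longrightarrow> (LBINT t=x..q*x. f t) = B"
    and ab: "0 < \<alpha>" "\<alpha> \<le> \<beta>"
  shows "AE t in lborel. indicator {\<alpha>..\<beta>} t * (f t - (A / ln p) / t) = 0"
proof -
  define c0 where "c0 = A / ln p"
  define F where "F x = (LBINT t=ereal 1..ereal x. f t)" for x :: real
  define H where "H s = F (exp s) - c0 * s" for s :: real
  have lp: "ln p \<noteq> 0" using p by simp
  have lq: "ln q \<noteq> 0" using q by simp
  have Fd: "(LBINT t=ereal u..ereal v. f t) = F v - F u" if "0<u" "0<v" for u v :: real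
    using LI_sum[OF LI, of 1 u v] that unfolding F_def by simp
  have cont: "isCont H s" for s
  proof -
    have "isCont (\<lambda>x. LBINT t=ereal 1..ereal x. f t) (exp s)" by (rule LI_cont[OF LI]) auto
    then have "isCont (\<lambda>s. F (exp s)) s" unfolding F_def by (rule isCont_o2[OF isCont_exp])
    then show ?thesis unfolding H_def by (intro continuous_intros)
  qed
  have pa: "H (s + ln p) = H s" for s
  proof -
    have e: "exp (s + ln p) = p * exp s" using p by (simp add: exp_add)
    have "F (p * exp s) = F (exp s) + A" using Fd[of "exp s" "p * exp s"] hA[of "exp s"] p by simp
    then show ?thesis unfolding H_def e c0_def using lp by (simp add: field_simps)
  qed
  have pb: "H (s + ln q) = H s + (B - c0 * ln q)" for s
  proof -
    have e: "exp (s + ln q) = q * exp s" using q by (simp add: exp_add)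
    have "F (q * exp s) = F (exp s) + B" using Fd[of "exp s" "q * exp s"] hB[of "exp s"] q by simp
    then show ?thesis unfolding H_def e by (simp add: algebra_simps)
  qed
  have Hc: "H s = H 0" for s by (rule periodic_const[OF cont lp lq irr pa pb])
  have Fv: "F x = H 0 + c0 * ln x" if "x > 0" for x using Hc[of "ln x"] that unfolding H_def by simp
  have Iv: "(LBINT t=ereal u..ereal v. f t) = c0 * (ln v - ln u)" if "0<u" "0<v" for u v
    using Fd[OF that] Fv that by (simp add: algebra_simps)
  have Ic: "(LBINT t=ereal u..ereal v. c0 / t) = c0 * (ln v - ln u)" if "0<u" "u \<le> v" for u v
  proof -
    have "(LBINT t=ereal u..ereal v. c0 / t) = c0 * ln v - c0 * ln u"
    proof (rule interval_integral_FTC_finite)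
      show "continuous_on {min u v..max u v} (\<lambda>t. c0 / t)" using that
        by (intro continuous_intros) auto
      fix x assume "min u v \<le> x" "x \<le> max u v"
      then have "x > 0" using that by auto
      then show "((\<lambda>t. c0 * ln t) has_vector_derivative c0 / x) (at x within {min u v..max u v})"
        by (auto intro!: derivative_eq_intros simp: has_real_derivative_iff_has_vector_derivative[symmetric] field_simps)
    qed
    then show ?thesis by (simp add: algebra_simps)
  qed
  have SI: "set_integrable lborel {\<alpha>..\<beta>} (\<lambda>t. f t - c0 / t)"
  proof (rule set_integral_diff(1))
    show "set_integrable lborel {\<alpha>..\<beta>} f" using LI ab by auto
    show "set_integrable lborel {\<alpha>..\<beta>} (\<lambda>t. c0 / t)" using ab
      by (intro borel_integrable_atLeastAtMost' continuous_intros) auto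
  qed
  have int: "integrable lborel (\<lambda>t. indicator {\<alpha>..\<beta>} t * (f t - c0/t))"
    using SI unfolding set_integrable_def by simp
  have z: "(LBINT t:{x<..}. indicator {\<alpha>..\<beta>} t * (f t - c0/t)) = 0" for x
  proof -
    define m where "m = max x \<alpha>"
    define M where "M = max x \<beta>"
    have mM: "0 < m" "m \<le> M" using ab by (auto simp: m_def M_def)
    have "(LBINT t:{x<..}. indicator {\<alpha>..\<beta>} t * (f t - c0/t)) = (LBINT t. indicator {m<..M} t * (f t - c0/t))"
      unfolding set_lebesgue_integral_def
      by (rule integral_discrete_difference[where X="{\<alpha>}"]) (auto simp: m_def M_def split: split_indicator)
    also have "\<dots> = (LBINT t:{m<..M}. (f t - c0/t))" by (simp add: set_lebesgue_integral_def)
    also have "\<dots> = (LBINT t=ereal m..ereal M. (f t - c0/t))" by (rule interval_integral_Ioc[symmetric]) (use mM in simp)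
    also have "\<dots> = (LBINT t=ereal m..ereal M. f t) - (LBINT t=ereal m..ereal M. c0/t)"
    proof (rule interval_lebesgue_integral_diff(2))
      show "interval_lebesgue_integrable lborel (ereal m) (ereal M) f" by (rule LI_interval[OF LI]) (use mM in auto)
      show "interval_lebesgue_integrable lborel (ereal m) (ereal M) (\<lambda>t. c0 / t)"
        using mM by (intro interval_integrable_continuous_on continuous_intros) auto
    qed
    also have "\<dots> = 0" using Iv[of m M] Ic[of m M] mM by simp
    finally show ?thesis .
  qed
  show ?thesis using ae_zero_Ioi[OF int z] unfolding c0_def .
qed

theorem mainTheorem4:
  fixes p q :: real and f :: "real \<Rightarrow> real"
  assumes "p > 0" and "q > 0" and "p \<noteq> 1" and "q \<noteq> 1"
    and "ln p / ln q \<notin> \<rat>"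
    and "locally_integrable_punctured f"
    and "\<exists>A. \<forall>x. x \<noteq> 0 \<longrightarrow> (LBINT t=x..p*x. f t) = A"
    and "\<exists>B. \<forall>x. x \<noteq> 0 \<longrightarrow> (LBINT t=x..q*x. f t) = B"
  shows "\<exists>c. AE t in lborel. t \<noteq> 0 \<longrightarrow> f t = c / t"
proof -
  obtain A where hA0: "\<And>x. x \<noteq> 0 \<Longrightarrow> (LBINT t=x..p*x. f t) = A" using assms(7) by blast
  obtain B where hB0: "\<And>x. x \<noteq> 0 \<Longrightarrow> (LBINT t=x..q*x. f t) = B" using assms(8) by blast
  have LIK: "set_integrable lborel {u..v} f" if "0 < u \<or> v < 0" for u v :: real
    using assms(6) that unfolding locally_integrable_punctured_def by auto
  have LI: "\<And>u v. 0 < u \<Longrightarrow> u \<le> v \<Longrightarrow> set_integrable lborel {u..v} f" using LIK by auto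
  have LIn: "set_integrable lborel {u..v} (\<lambda>t. - f (- t))" if "0 < u" "u \<le> v" for u v :: real
  proof -
    have "integrable lborel (\<lambda>x. indicator {-v..-u} x *\<^sub>R f x)"
      using LIK[of "-v" "-u"] that unfolding set_integrable_def by auto
    then have "integrable lborel (\<lambda>x. indicator {-v..-u} (0 + -1 * x) *\<^sub>R f (0 + -1 * x))"
      using lborel_integrable_real_affine_iff[of "-1" "\<lambda>x. indicator {-v..-u} x *\<^sub>R f x" 0] by simp
    then have "integrable lborel (\<lambda>x. - (indicator {-v..-u} (0 + -1 * x) *\<^sub>R f (0 + -1 * x)))"
      by (rule integrable_minus)
    moreover have "indicator {-v..-u} (0 + -1 * x) = (indicator {u..v} x :: real)" for x :: real
      by (auto split: split_indicator)
    ultimately show ?thesis unfolding set_integrable_def by simp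
  qed
  have hA: "(LBINT t=x..p*x. f t) = A" if "x > 0" for x :: real using hA0 that by simp
  have hB: "(LBINT t=x..q*x. f t) = B" if "x > 0" for x :: real using hB0 that by simp
  have refl: "(LBINT t=x..r*x. - f (- t)) = (LBINT t=(-x)..r*(-x). f t)" for x r :: real
  proof -
    have "(LBINT t=(-x)..r*(-x). f t) = (LBINT t=ereal (r*x)..ereal x. f (- t))"
      using interval_integral_reflect[of "ereal (-x)" "ereal (r*(-x))" f] by simp
    also have "\<dots> = - (LBINT t=ereal x..ereal (r*x). f (- t))"
      by (rule interval_integral_endpoints_reverse)
    also have "\<dots> = (LBINT t=ereal x..ereal (r*x). - f (- t))"
      by (simp add: interval_lebesgue_integral_uminus)
    finally show ?thesis by simp
  qed
  have hA': "(LBINT t=x..p*x. - f (- t)) = A" if "x > 0" for x :: real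
    using refl[of x p] hA0[of "-x"] that by simp
  have hB': "(LBINT t=x..q*x. - f (- t)) = B" if "x > 0" for x :: real
    using refl[of x q] hB0[of "-x"] that by simp
  define c where "c = A / ln p"
  define I where "I n = {1 / real (Suc n) .. real (Suc n)}" for n :: nat
  have Ipos: "0 < 1 / real (Suc n)" "1 / real (Suc n) \<le> real (Suc n)" for n :: nat
    by (auto simp: field_simps)
  have pos: "AE t in lborel. indicator (I n) t * (f t - c / t) = 0" for n
    unfolding I_def c_def
    by (rule pos_half[OF assms(1,3) assms(2,4) assms(5) LI hA hB Ipos]) auto
  define \<phi> where "\<phi> n x = indicator (I n) x * (- f (- x) - c / x)" for n x
  have neg0: "AE t in lborel. \<phi> n t = 0" for n
    unfolding \<phi>_def I_def c_def
    by (rule pos_half[OF assms(1,3) assms(2,4) assms(5) LIn hA' hB' Ipos]) auto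
  have \<phi>m[measurable]: "\<phi> n \<in> borel_measurable borel" for n
  proof -
    have "set_integrable lborel (I n) (\<lambda>t. - f (- t) - c / t)"
    proof (rule set_integral_diff(1))
      show "set_integrable lborel (I n) (\<lambda>t. - f (- t))" unfolding I_def using LIn Ipos by auto
      show "set_integrable lborel (I n) (\<lambda>t. c / t)" unfolding I_def using Ipos[of n]
        by (intro borel_integrable_atLeastAtMost' continuous_intros) auto
    qed
    then have "(\<lambda>x. indicator (I n) x *\<^sub>R (- f (- x) - c / x)) \<in> borel_measurable lborel"
      unfolding set_integrable_def by auto
    then show ?thesis unfolding \<phi>_def by simp
  qed
  have neg: "AE t in lborel. \<phi> n (- t) = 0" for n
  proof -
    have "AE x in lborel. \<phi> n (- (- x)) = 0" using neg0[of n] by simp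
    then have "AE t in distr lborel borel uminus. \<phi> n (- t) = 0"
      by (subst AE_distr_iff) auto
    then show ?thesis unfolding lborel_distr_uminus .
  qed
  have "AE t in lborel. \<forall>n. indicator (I n) t * (f t - c / t) = 0 \<and> \<phi> n (- t) = 0"
    using pos neg by (simp add: AE_all_countable AE_conj_iff)
  then have "AE t in lborel. t \<noteq> 0 \<longrightarrow> f t = c / t"
  proof eventually_elim
    case (elim t)
    show ?case
    proof
      assume t0: "t \<noteq> 0"
      define n where "n = nat \<lceil>\<bar>t\<bar> + 1 / \<bar>t\<bar>\<rceil>"
      have "\<bar>t\<bar> + 1 / \<bar>t\<bar> \<le> real n" unfolding n_def by linarith
      moreover have "0 \<le> 1 / \<bar>t\<bar>" "0 \<le> \<bar>t\<bar>" by auto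
      ultimately have le1: "\<bar>t\<bar> \<le> real (Suc n)" and le2: "1 / \<bar>t\<bar> < real (Suc n)"
        by linarith+
      then have le3: "1 / real (Suc n) \<le> \<bar>t\<bar>" using t0 by (simp add: field_simps)
      have absI: "\<bar>t\<bar> \<in> I n" using le1 le3 unfolding I_def by auto
      show "f t = c / t"
      proof (cases "t > 0")
        case True
        then have "indicator (I n) t = (1::real)" using absI by simp
        then show ?thesis using elim[rule_format, of n] by simp
      next
        case False
        then have "indicator (I n) (- t) = (1::real)" using absI t0 by simp
        then show ?thesis using elim[rule_format, of n] t0 unfolding \<phi>_def by (simp add: field_simps)
      qed
    qed
  qed
  then show ?thesis by blast
qed

end
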